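(* Assume $\mathbb{E}[f(x)]\ge c$ and fix a type vector $\kappa$. Let ${\bf g}$ be a network that is stable under complete information (i.e., when all agents know $\kappa$, no selected pair would form a new link or sever an existing link of ${\bf g}$) and that belongs to one of the following classes: (1) the empty network; (2) a minimally connected (tree) network, including a star; (3) the complete network; (4) a core-periphery network; (5) a wheel network. Then ${\bf g}\in G^*_{IC}(\kappa)$.
   Context: Model. There are $N\ge 2$ agents $I=\{1,\dots,N\}$. Each agent $i$ has a private type $k_i\in X$; types are drawn i.i.d. from a prior distribution $H$ on $X$, and $\kappa=(k_1,\dots,k_N)$ is the type vector. There is a function $f:X\to\mathbb{R}_{>0}$, a link cost $c>0$ and a decay factor $\delta\in(0,1)$; $\mathbb{E}[f(x)]=\int_X f\,dH$ is assumed well defined. A network ${\bf g}$ is a set of unordered pairs $ij$ ($i\neq j$), called links. Agents $i,j$ are connected in ${\bf g}$ if there is a path of links between them; $d_{ij}$ is the length of a shortest such path ($\infty$ if not connected); $C_i$ denotes the component of ${\bf g}$ containing $i$. Agent $i$'s payoff is $u_i({\bf g})=\sum_{j\neq i,\ j\text{ connected to }i}\delta^{d_{ij}-1}f(k_j)-c\cdot\#\{j: ij\in{\bf g}\}$. Dynamics. The network is empty at $t=0$. In each period $t\ge1$ one unordered pair $(i,j)$ is selected; the sequence of selected pairs up to $t$ is the selection path $\gamma(t)$. The selected agents observe each other's components and simultaneously choose $a_{ij},a_{ji}\in\{0,1\}$ (1 = agree to form the link if absent / keep it if present, 0 = refuse / sever); after the period the link $ij$ is present iff $a_{ij}=a_{ji}=1$.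 Agents are myopic and play the stable optimistic equilibrium (SOE): agent $i$ chooses $1$ iff his expected current payoff (w.r.t. his belief) from the network resulting with the link $ij$ is at least his current payoff without it. Information. Under complete information every agent knows $\kappa$. Under incomplete information (simple updating rule), if $i$ and $j$ have ever been connected at some period so far, each knows the other's type; otherwise each one's belief about the other's type is the prior $H$. Emergence and stability. Given a selection path $\gamma(t)$, the resulting network ${\bf g}(\gamma(t))$ and beliefs $B(\gamma(t))$ are uniquely determined. A pair $({\bf g},B)$ is stable if no link is formed or severed along any subsequent selection path. $G^*_{IC}(\kappa)$ is the set of networks ${\bf g}$ such that, under incomplete information, ${\bf g}={\bf g}(\gamma(t))$ for some selection path $\gamma(t)$ and $({\bf g}(\gamma(t)),B(\gamma(t)))$ is stable. Network classes. ${\bf g}$ is complete if $ij\in{\bf g}$ for all $i\neq j$. A star: there is $i$ with $ij\in{\bf g}$ for all $j\neq i$ and no other links. Core-periphery: there is a nonempty $I'\subsetneq I$ such that all pairs in $I'$ are linked and every $j'\in I\setminus I'$ is linked to exactly one agent of $I'$ and to no other agent. Tree (minimally connected): connected, and removing any link disconnects it. Wheel: there is a bijection $\pi:I\to I$ such that ${\bf g}$ consists exactly of the links $\pi^{-1}(1)\pi^{-1}(2),\pi^{-1}(2)\pi^{-1}(3),\dots,\pi^{-1}(N-1)\pi^{-1}(N),\pi^{-1}(N)\pi^{-1}(1)$. *)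

theory Defs
  imports "HOL-Probability.Probability_Measure"
begin

(* Agents are 0..N-1. A network is a set of links; a link ij is the two-element set {i,j}. *)

definition network :: "nat \<Rightarrow> nat set set \<Rightarrow> bool" where
  "network N g \<longleftrightarrow> (\<forall>e\<in>g. \<exists>i j. i < N \<and> j < N \<and> i \<noteq> j \<and> e = {i, j})"

fun walk :: "nat set set \<Rightarrow> nat \<Rightarrow> nat \<Rightarrow> nat \<Rightarrow> bool" where
  "walk g i j 0 = (i = j)"
| "walk g i j (Suc n) = (\<exists>m. {i, m} \<in> g \<and> walk g m j n)"

definition conn :: "nat set set \<Rightarrow> nat \<Rightarrow> nat \<Rightarrow> bool" where
  "conn g i j \<longleftrightarrow> (\<exists>n. walk g i j n)"

(* shortest path length d_ij (only used when i, j are connected) *)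
definition dist :: "nat set set \<Rightarrow> nat \<Rightarrow> nat \<Rightarrow> nat" where
  "dist g i j = (LEAST n. walk g i j n)"

(* payoff of agent i in network g, when i values agent j at v j
   (v j = f(k_j) under knowledge, v j = E[f] under the prior: payoffs are linear in f(k_j),
   so the expected payoff replaces f(k_j) by its expectation) *)
definition payoff :: "nat \<Rightarrow> real \<Rightarrow> real \<Rightarrow> (nat \<Rightarrow> real) \<Rightarrow> nat set set \<Rightarrow> nat \<Rightarrow> real" where
  "payoff N \<delta> c v g i =
     (\<Sum>j\<in>{j. j < N \<and> j \<noteq> i \<and> conn g i j}. \<delta> ^ (dist g i j - 1) * v j)
     - c * real (card {j. j < N \<and> {i, j} \<in> g})"

definition agrees :: "nat \<Rightarrow> real \<Rightarrow> real \<Rightarrow> (nat \<Rightarrow> real) \<Rightarrow> nat set set \<Rightarrow> nat \<Rightarrow> nat \<Rightarrow> bool" where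
  "agrees N \<delta> c v g i j \<longleftrightarrow> payoff N \<delta> c v (insert {i, j} g) i \<ge> payoff N \<delta> c v (g - {{i, j}}) i"

definition decide :: "nat \<Rightarrow> real \<Rightarrow> real \<Rightarrow> (nat \<Rightarrow> nat \<Rightarrow> real) \<Rightarrow> nat set set \<Rightarrow> nat \<Rightarrow> nat \<Rightarrow> nat set set" where
  "decide N \<delta> c val g i j =
     (if agrees N \<delta> c (val i) g i j \<and> agrees N \<delta> c (val j) g j i
      then insert {i, j} g else g - {{i, j}})"

definition valid_path :: "nat \<Rightarrow> (nat \<times> nat) list \<Rightarrow> bool" where
  "valid_path N p \<longleftrightarrow> (\<forall>(i, j)\<in>set p. i < N \<and> j < N \<and> i \<noteq> j)"

definition stable_CI :: "nat \<Rightarrow> real \<Rightarrow> real \<Rightarrow> ('x \<Rightarrow> real) \<Rightarrow> (nat \<Rightarrow> 'x) \<Rightarrow> nat set set \<Rightarrow> bool" where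
  "stable_CI N \<delta> c f k g \<longleftrightarrow>
     (\<forall>i j. i < N \<longrightarrow> j < N \<longrightarrow> i \<noteq> j \<longrightarrow> decide N \<delta> c (\<lambda>_ j. f (k j)) g i j = g)"

(* State: network and knowledge relation K a b = "a and b have been connected at some period so far",
   in which case a knows b's type; otherwise a's belief about b's type is the prior H,
   with expectation Ef = E[f(x)]. *)

type_synonym state = "nat set set \<times> (nat \<Rightarrow> nat \<Rightarrow> bool)"

definition step_IC :: "nat \<Rightarrow> real \<Rightarrow> real \<Rightarrow> ('x \<Rightarrow> real) \<Rightarrow> (nat \<Rightarrow> 'x) \<Rightarrow> real
                        \<Rightarrow> state \<Rightarrow> nat \<times> nat \<Rightarrow> state" where
  "step_IC N \<delta> c f k Ef s p =
     (let g = fst s; K = snd s; (i, j) = p;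
          g' = decide N \<delta> c (\<lambda>a b. if K a b then f (k b) else Ef) g i j
      in (g', \<lambda>a b. K a b \<or> conn g' a b))"

definition run_IC :: "nat \<Rightarrow> real \<Rightarrow> real \<Rightarrow> ('x \<Rightarrow> real) \<Rightarrow> (nat \<Rightarrow> 'x) \<Rightarrow> real
                        \<Rightarrow> state \<Rightarrow> (nat \<times> nat) list \<Rightarrow> state" where
  "run_IC N \<delta> c f k Ef s p = foldl (step_IC N \<delta> c f k Ef) s p"

definition init_state :: state where
  "init_state = ({}, \<lambda>_ _. False)"

definition stable_IC :: "nat \<Rightarrow> real \<Rightarrow> real \<Rightarrow> ('x \<Rightarrow> real) \<Rightarrow> (nat \<Rightarrow> 'x) \<Rightarrow> real \<Rightarrow> state \<Rightarrow> bool" where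
  "stable_IC N \<delta> c f k Ef s \<longleftrightarrow>
     (\<forall>p. valid_path N p \<longrightarrow> fst (run_IC N \<delta> c f k Ef s p) = fst s)"

definition G_IC :: "nat \<Rightarrow> real \<Rightarrow> real \<Rightarrow> ('x \<Rightarrow> real) \<Rightarrow> (nat \<Rightarrow> 'x) \<Rightarrow> real \<Rightarrow> nat set set set" where
  "G_IC N \<delta> c f k Ef =
     {g. \<exists>p. valid_path N p \<and> fst (run_IC N \<delta> c f k Ef init_state p) = g
              \<and> stable_IC N \<delta> c f k Ef (run_IC N \<delta> c f k Ef init_state p)}"

definition is_complete :: "nat \<Rightarrow> nat set set \<Rightarrow> bool" where
  "is_complete N g \<longleftrightarrow> (\<forall>i j. i < N \<longrightarrow> j < N \<longrightarrow> i \<noteq> j \<longrightarrow> {i, j} \<in> g)"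

definition is_star :: "nat \<Rightarrow> nat set set \<Rightarrow> bool" where
  "is_star N g \<longleftrightarrow> (\<exists>i<N. g = {{i, j} | j. j < N \<and> j \<noteq> i})"

definition is_core_periphery :: "nat \<Rightarrow> nat set set \<Rightarrow> bool" where
  "is_core_periphery N g \<longleftrightarrow>
     (\<exists>I'. I' \<noteq> {} \<and> I' \<subset> {..<N} \<and>
        (\<forall>a\<in>I'. \<forall>b\<in>I'. a \<noteq> b \<longrightarrow> {a, b} \<in> g) \<and>
        (\<forall>j\<in>{..<N} - I'. card {a\<in>I'. {a, j} \<in> g} = 1 \<and>
                           (\<forall>b. b \<notin> I' \<longrightarrow> {j, b} \<notin> g)))"

definition is_tree :: "nat \<Rightarrow> nat set set \<Rightarrow> bool" where
  "is_tree N g \<longleftrightarrow>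
     (\<forall>i j. i < N \<longrightarrow> j < N \<longrightarrow> conn g i j) \<and>
     (\<forall>e\<in>g. \<not> (\<forall>i j. i < N \<longrightarrow> j < N \<longrightarrow> conn (g - {e}) i j))"

(* wheel: sigma = pi^{-1} lists the agents in cyclic order (0-indexed positions) *)
definition is_wheel :: "nat \<Rightarrow> nat set set \<Rightarrow> bool" where
  "is_wheel N g \<longleftrightarrow>
     (\<exists>\<sigma>. bij_betw \<sigma> {..<N} {..<N} \<and> g = {{\<sigma> m, \<sigma> ((m + 1) mod N)} | m. m < N})"

end

theory Submission
  imports Defs
begin


lemma walk_mono: "walk g i j n \<Longrightarrow> g \<subseteq> g' \<Longrightarrow> walk g' i j n"
  by (induction n arbitrary: i) auto

lemma conn_mono: "conn g i j \<Longrightarrow> g \<subseteq> g' \<Longrightarrow> conn g' i j"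
  unfolding conn_def using walk_mono by blast

lemma conn_refl: "conn g i i"
  unfolding conn_def by (rule exI[of _ 0]) simp

lemma walk_snoc: "walk g i m n \<Longrightarrow> {m, j} \<in> g \<Longrightarrow> walk g i j (Suc n)"
  by (induction n arbitrary: i) auto

lemma walk_append: "walk g i m n \<Longrightarrow> walk g m j n' \<Longrightarrow> walk g i j (n + n')"
  by (induction n arbitrary: i) auto

lemma walk_sym: "walk g i j n \<Longrightarrow> walk g j i n"
proof (induction n arbitrary: i)
  case 0 then show ?case by simp
next
  case (Suc n)
  then obtain m where m: "{i, m} \<in> g" "walk g m j n" by auto
  then have "walk g j m n" using Suc.IH by blast
  moreover have "{m, i} \<in> g" using m by (simp add: insert_commute)
  ultimately show ?case by (rule walk_snoc)
qed

lemma conn_sym: "conn g i j \<Longrightarrow> conn g j i"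
  unfolding conn_def using walk_sym by blast

lemma conn_trans: "conn g i m \<Longrightarrow> conn g m j \<Longrightarrow> conn g i j"
  unfolding conn_def using walk_append by blast

lemma conn_edge: "{i, j} \<in> g \<Longrightarrow> conn g i j"
  unfolding conn_def by (rule exI[of _ 1]) auto

definition isol :: "nat set set \<Rightarrow> nat \<Rightarrow> bool" where
  "isol h x \<longleftrightarrow> (\<forall>e\<in>h. x \<notin> e)"

lemma isol_walk: "isol h j \<Longrightarrow> walk h x j n \<Longrightarrow> x = j"
proof (induction n arbitrary: x)
  case 0 then show ?case by simp
next
  case (Suc n)
  then obtain m where m: "{x, m} \<in> h" "walk h m j n" by auto
  then have "m = j" using Suc by blast
  then show ?case using m Suc.prems(1) unfolding isol_def by auto
qed

lemma isol_conn: "isol h j \<Longrightarrow> conn h x j \<Longrightarrow> x = j"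
  unfolding conn_def using isol_walk by blast

lemma isol_insert: "isol (insert {a, b} h) x \<longleftrightarrow> isol h x \<and> x \<noteq> a \<and> x \<noteq> b"
  unfolding isol_def by auto

definition wt :: "real \<Rightarrow> nat set set \<Rightarrow> nat \<Rightarrow> nat \<Rightarrow> real" where
  "wt \<delta> Y i b = (if conn Y i b then \<delta> ^ (Defs.dist Y i b - 1) else 0)"

lemma wt_nonneg: "0 \<le> \<delta> \<Longrightarrow> 0 \<le> wt \<delta> Y i b"
  unfolding wt_def by auto

lemma dist_le: "walk Y i b n \<Longrightarrow> Defs.dist Y i b \<le> n"
  unfolding Defs.dist_def by (rule Least_le)

lemma dist_walk: "conn Y i b \<Longrightarrow> walk Y i b (Defs.dist Y i b)"
  unfolding Defs.dist_def conn_def by (rule LeastI_ex)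

lemma wt_ge: "0 \<le> \<delta> \<Longrightarrow> \<delta> \<le> 1 \<Longrightarrow> walk Y i b n \<Longrightarrow> \<delta> ^ (n - 1) \<le> wt \<delta> Y i b"
  unfolding wt_def using dist_le[of Y i b n]
  by (auto simp: conn_def intro!: power_decreasing)

lemma wt_le: "0 \<le> \<delta> \<Longrightarrow> \<delta> \<le> 1 \<Longrightarrow> (\<And>m. m < n \<Longrightarrow> \<not> walk Y i b m) \<Longrightarrow> wt \<delta> Y i b \<le> \<delta> ^ (n - 1)"
proof -
  assume d: "0 \<le> \<delta>" "\<delta> \<le> 1" and nw: "\<And>m. m < n \<Longrightarrow> \<not> walk Y i b m"
  show ?thesis
  proof (cases "conn Y i b")
    case True
    then have "walk Y i b (Defs.dist Y i b)" by (rule dist_walk)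
    then have "n \<le> Defs.dist Y i b" using nw by (meson not_less)
    then show ?thesis using True d unfolding wt_def by (auto intro!: power_decreasing)
  qed (use d in \<open>auto simp: wt_def\<close>)
qed

lemma wt_mono: "0 \<le> \<delta> \<Longrightarrow> \<delta> \<le> 1 \<Longrightarrow> Y \<subseteq> Y' \<Longrightarrow> wt \<delta> Y i b \<le> wt \<delta> Y' i b"
proof (cases "conn Y i b")
  case True
  assume d: "0 \<le> \<delta>" "\<delta> \<le> 1" and s: "Y \<subseteq> Y'"
  have "walk Y' i b (Defs.dist Y i b)" using dist_walk[OF True] s walk_mono by blast
  from wt_ge[OF d this] show ?thesis using True by (simp add: wt_def)
qed (auto simp: wt_def)

lemma wt_le1: "0 \<le> \<delta> \<Longrightarrow> \<delta> \<le> 1 \<Longrightarrow> i \<noteq> b \<Longrightarrow> wt \<delta> Y i b \<le> 1"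
  using wt_le[of \<delta> 1 Y i b] by auto

lemma wt_edge: "0 \<le> \<delta> \<Longrightarrow> \<delta> \<le> 1 \<Longrightarrow> {i, b} \<in> Y \<Longrightarrow> 1 \<le> wt \<delta> Y i b"
  using wt_ge[of \<delta> Y i b 1] by auto

lemma wt_noedge: "0 \<le> \<delta> \<Longrightarrow> \<delta> \<le> 1 \<Longrightarrow> i \<noteq> b \<Longrightarrow> {i, b} \<notin> Y \<Longrightarrow> wt \<delta> Y i b \<le> \<delta>"
proof -
  assume a: "0 \<le> \<delta>" "\<delta> \<le> 1" "i \<noteq> b" "{i, b} \<notin> Y"
  have nw: "\<And>m. m < 2 \<Longrightarrow> \<not> walk Y i b m"
  proof -
    fix m :: nat assume "m < 2"
    then have "m = 0 \<or> m = Suc 0" by auto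
    then show "\<not> walk Y i b m" using a by auto
  qed
  have "wt \<delta> Y i b \<le> \<delta> ^ (2 - 1)" by (rule wt_le[OF a(1,2) nw])
  then show ?thesis by simp
qed

lemma wt_two: "0 \<le> \<delta> \<Longrightarrow> \<delta> \<le> 1 \<Longrightarrow> {i, m} \<in> Y \<Longrightarrow> {m, b} \<in> Y \<Longrightarrow> \<delta> \<le> wt \<delta> Y i b"
  using wt_ge[of \<delta> Y i b 2] by (auto simp: numeral_2_eq_2)



lemma payoff_wt: "payoff N \<delta> c v g i =
   (\<Sum>b\<in>{b. b < N \<and> b \<noteq> i}. wt \<delta> g i b * v b) - c * real (card {j. j < N \<and> {i, j} \<in> g})"
proof -
  have fin: "finite {b. b < N \<and> b \<noteq> i}" by simp
  have e: "{j. j < N \<and> j \<noteq> i \<and> conn g i j} = {b \<in> {b. b < N \<and> b \<noteq> i}. conn g i b}" by auto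
  show ?thesis unfolding payoff_def e sum.inter_filter[OF fin]
    by (auto simp: wt_def intro!: sum.cong)
qed

lemma card_ins: "i \<noteq> j \<Longrightarrow> j < (N::nat) \<Longrightarrow>
  card {b. b < N \<and> {i, b} \<in> insert {i, j} X} = Suc (card {b. b < N \<and> {i, b} \<in> X - {{i, j}}})"
proof -
  assume a: "i \<noteq> j" "j < N"
  define S where "S = {b. b < N \<and> {i, b} \<in> X - {{i, j}}}"
  have e: "{b. b < N \<and> {i, b} \<in> insert {i, j} X} = insert j S"
    using a unfolding S_def by (auto simp: doubleton_eq_iff)
  have nj: "j \<notin> S" unfolding S_def by auto
  have fin: "finite S" unfolding S_def by (rule finite_subset[of _ "{..<N}"]) auto
  show ?thesis unfolding e S_def[symmetric] using card_insert_disjoint[OF fin nj] .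
qed

lemma agrees_gain: "i \<noteq> j \<Longrightarrow> j < N \<Longrightarrow> agrees N \<delta> c v X i j \<longleftrightarrow>
  c \<le> (\<Sum>b\<in>{b. b < N \<and> b \<noteq> i}. (wt \<delta> (insert {i, j} X) i b - wt \<delta> (X - {{i, j}}) i b) * v b)"
proof -
  assume a: "i \<noteq> j" "j < N"
  let ?B = "{b. b < N \<and> b \<noteq> i}"
  have s: "(\<Sum>b\<in>?B. (wt \<delta> (insert {i, j} X) i b - wt \<delta> (X - {{i, j}}) i b) * v b)
     = (\<Sum>b\<in>?B. wt \<delta> (insert {i, j} X) i b * v b) - (\<Sum>b\<in>?B. wt \<delta> (X - {{i, j}}) i b * v b)"
    by (simp add: left_diff_distrib sum_subtractf)
  show ?thesis unfolding agrees_def payoff_wt card_ins[OF a] s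
    by (simp add: distrib_left) linarith
qed

lemma payoff_cong: "(\<And>b. b < N \<Longrightarrow> b \<noteq> i \<Longrightarrow> conn g i b \<Longrightarrow> v b = v' b) \<Longrightarrow>
   payoff N \<delta> c v g i = payoff N \<delta> c v' g i"
proof -
  assume h: "\<And>b. b < N \<Longrightarrow> b \<noteq> i \<Longrightarrow> conn g i b \<Longrightarrow> v b = v' b"
  have "(\<Sum>j\<in>{j. j < N \<and> j \<noteq> i \<and> conn g i j}. \<delta> ^ (Defs.dist g i j - 1) * v j)
      = (\<Sum>j\<in>{j. j < N \<and> j \<noteq> i \<and> conn g i j}. \<delta> ^ (Defs.dist g i j - 1) * v' j)"
    by (rule sum.cong) (simp_all add: h)
  then show ?thesis unfolding payoff_def by simp
qed

lemma agrees_cong: "(\<And>b. b < N \<Longrightarrow> b \<noteq> i \<Longrightarrow> conn (insert {i, j} g) i b \<Longrightarrow> v b = v' b) \<Longrightarrow>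
   agrees N \<delta> c v g i j = agrees N \<delta> c v' g i j"
proof -
  assume h: "\<And>b. b < N \<Longrightarrow> b \<noteq> i \<Longrightarrow> conn (insert {i, j} g) i b \<Longrightarrow> v b = v' b"
  have 1: "payoff N \<delta> c v (insert {i, j} g) i = payoff N \<delta> c v' (insert {i, j} g) i"
    by (rule payoff_cong) (rule h)
  have 2: "payoff N \<delta> c v (g - {{i, j}}) i = payoff N \<delta> c v' (g - {{i, j}}) i"
  proof (rule payoff_cong)
    fix b assume "b < N" "b \<noteq> i" "conn (g - {{i, j}}) i b"
    moreover have "g - {{i, j}} \<subseteq> insert {i, j} g" by blast
    ultimately show "v b = v' b" using h conn_mono by blast
  qed
  show ?thesis unfolding agrees_def 1 2 ..
qed

lemma decide_cong:
  "(\<And>b. b < N \<Longrightarrow> b \<noteq> i \<Longrightarrow> conn (insert {i, j} g) i b \<Longrightarrow> V i b = V' i b) \<Longrightarrow>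
   (\<And>b. b < N \<Longrightarrow> b \<noteq> j \<Longrightarrow> conn (insert {j, i} g) j b \<Longrightarrow> V j b = V' j b) \<Longrightarrow>
   decide N \<delta> c V g i j = decide N \<delta> c V' g i j"
  unfolding decide_def using agrees_cong[of N i j g "V i" "V' i" \<delta> c] agrees_cong[of N j i g "V j" "V' j" \<delta> c]
  by (simp add: insert_commute)

lemma agree_new:
  assumes d: "0 \<le> \<delta>" "\<delta> \<le> 1" and ij: "i \<noteq> j" "j < N" and nc: "\<not> conn h i j"
    and vn: "\<And>b. b < N \<Longrightarrow> 0 \<le> v b" and vj: "c \<le> v j"
  shows "agrees N \<delta> c v h i j"
proof -
  let ?t = "\<lambda>b. (wt \<delta> (insert {i, j} h) i b - wt \<delta> (h - {{i, j}}) i b) * v b"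
  have nn: "0 \<le> ?t b" if "b < N" for b
  proof -
    have "wt \<delta> (h - {{i, j}}) i b \<le> wt \<delta> (insert {i, j} h) i b" by (rule wt_mono[OF d]) blast
    then show ?thesis using vn[OF that] by simp
  qed
  have "wt \<delta> (h - {{i, j}}) i j = 0"
    using nc conn_mono[of "h - {{i, j}}" i j h] by (auto simp: wt_def)
  moreover have "1 \<le> wt \<delta> (insert {i, j} h) i j" by (rule wt_edge[OF d]) simp
  ultimately have "v j \<le> ?t j" using vn[OF ij(2)] by (simp add: mult_le_cancel_right1)
  also have "?t j \<le> (\<Sum>b\<in>{b. b < N \<and> b \<noteq> i}. ?t b)"
    by (rule member_le_sum) (use ij nn in simp_all)
  finally show ?thesis using agrees_gain[OF ij, of \<delta> c v h] vj by linarith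
qed

lemma agree_sub:
  assumes d: "0 \<le> \<delta>" "\<delta> \<le> 1" and ij: "i \<noteq> j" "j < N" and hg: "h \<subseteq> g" and e: "{i, j} \<in> g"
    and vn: "\<And>b. b < N \<Longrightarrow> 0 \<le> v b" and ag: "agrees N \<delta> c v g i j"
    and cond: "\<And>b. b < N \<Longrightarrow> b \<noteq> i \<Longrightarrow>
        wt \<delta> g i b \<le> wt \<delta> (insert {i, j} h) i b \<or> wt \<delta> g i b \<le> wt \<delta> (g - {{i, j}}) i b"
  shows "agrees N \<delta> c v h i j"
proof -
  have gi: "insert {i, j} g = g" using e by auto
  have "(wt \<delta> (insert {i, j} g) i b - wt \<delta> (g - {{i, j}}) i b) * v b
      \<le> (wt \<delta> (insert {i, j} h) i b - wt \<delta> (h - {{i, j}}) i b) * v b" if b: "b \<in> {b. b < N \<and> b \<noteq> i}" for b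
  proof (rule mult_right_mono)
    show "0 \<le> v b" using vn b by auto
    have m1: "wt \<delta> (h - {{i, j}}) i b \<le> wt \<delta> (g - {{i, j}}) i b" by (rule wt_mono[OF d]) (use hg in blast)
    have m2: "wt \<delta> (g - {{i, j}}) i b \<le> wt \<delta> g i b" by (rule wt_mono[OF d]) blast
    have m3: "wt \<delta> (h - {{i, j}}) i b \<le> wt \<delta> (insert {i, j} h) i b" by (rule wt_mono[OF d]) blast
    show "wt \<delta> (insert {i, j} g) i b - wt \<delta> (g - {{i, j}}) i b
      \<le> wt \<delta> (insert {i, j} h) i b - wt \<delta> (h - {{i, j}}) i b"
    proof -
      have "wt \<delta> g i b \<le> wt \<delta> (insert {i, j} h) i b \<or> wt \<delta> g i b \<le> wt \<delta> (g - {{i, j}}) i b"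
        using cond b by simp
      then show ?thesis unfolding gi using m1 m2 m3 by (elim disjE; linarith)
    qed
  qed
  then have "(\<Sum>b\<in>{b. b < N \<and> b \<noteq> i}. (wt \<delta> (insert {i, j} g) i b - wt \<delta> (g - {{i, j}}) i b) * v b)
    \<le> (\<Sum>b\<in>{b. b < N \<and> b \<noteq> i}. (wt \<delta> (insert {i, j} h) i b - wt \<delta> (h - {{i, j}}) i b) * v b)"
    by (rule sum_mono)
  then show ?thesis using ag agrees_gain[OF ij, of \<delta> c v g] agrees_gain[OF ij, of \<delta> c v h] by linarith
qed



lemma step_IC_simp: "step_IC N \<delta> c f k Ef (h, K) (i, j) =
   (decide N \<delta> c (\<lambda>a b. if K a b then f (k b) else Ef) h i j,
    \<lambda>a b. K a b \<or> conn (decide N \<delta> c (\<lambda>a b. if K a b then f (k b) else Ef) h i j) a b)"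
  by (simp add: step_IC_def Let_def)

lemma run_Cons: "run_IC N \<delta> c f k Ef s (x # p) = run_IC N \<delta> c f k Ef (step_IC N \<delta> c f k Ef s x) p"
  by (simp add: run_IC_def)

lemma run_append: "run_IC N \<delta> c f k Ef s (p @ q) = run_IC N \<delta> c f k Ef (run_IC N \<delta> c f k Ef s p) q"
  by (simp add: run_IC_def)

lemma run_Nil: "run_IC N \<delta> c f k Ef s [] = s"
  by (simp add: run_IC_def)

lemma valid_append: "valid_path N (p @ q) \<longleftrightarrow> valid_path N p \<and> valid_path N q"
  by (auto simp: valid_path_def)

lemma valid_Cons: "valid_path N ((i, j) # q) \<longleftrightarrow> i < N \<and> j < N \<and> i \<noteq> j \<and> valid_path N q"
  by (auto simp: valid_path_def)

fun goodP1 :: "nat \<Rightarrow> nat set set \<Rightarrow> (nat \<times> nat) list \<Rightarrow> bool" where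
  "goodP1 N h [] = True"
| "goodP1 N h ((i, j) # es) = (i < N \<and> j < N \<and> i \<noteq> j \<and> \<not> conn h i j \<and> goodP1 N (insert {i, j} h) es)"

definition edges :: "(nat \<times> nat) list \<Rightarrow> nat set set" where
  "edges es = (\<lambda>(i, j). {i, j}) ` set es"

lemma edges_Nil[simp]: "edges [] = {}" by (simp add: edges_def)
lemma edges_Cons[simp]: "edges ((i, j) # es) = insert {i, j} (edges es)" by (simp add: edges_def)
lemma edges_append[simp]: "edges (p @ q) = edges p \<union> edges q" by (auto simp: edges_def)

lemma goodP1_valid: "goodP1 N h es \<Longrightarrow> valid_path N es"
  by (induction N h es rule: goodP1.induct) (auto simp: valid_path_def)

lemma decide_same: "insert {i, j} h = insert {i, j} h' \<Longrightarrow> h - {{i, j}} = h' - {{i, j}} \<Longrightarrow>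
  decide N \<delta> c V h i j = decide N \<delta> c V h' i j"
  unfolding decide_def agrees_def by (simp add: insert_commute)

lemma decide_agree: "agrees N \<delta> c (V i) h i j \<Longrightarrow> agrees N \<delta> c (V j) h j i \<Longrightarrow>
  decide N \<delta> c V h i j = insert {i, j} h"
  unfolding decide_def by simp



lemma phase1:
  assumes d: "0 \<le> \<delta>" "\<delta> \<le> 1" and fp: "\<And>b. b < N \<Longrightarrow> 0 < f (k b)" and Ef: "c \<le> Ef" "0 \<le> Ef"
  shows "goodP1 N h es \<Longrightarrow> (\<forall>a b. K a b \<longrightarrow> conn h a b) \<Longrightarrow> (\<forall>a b. a \<noteq> b \<longrightarrow> conn h a b \<longrightarrow> K a b) \<Longrightarrow>
    fst (run_IC N \<delta> c f k Ef (h, K) es) = h \<union> edges es \<and>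
    (\<forall>a b. snd (run_IC N \<delta> c f k Ef (h, K) es) a b \<longrightarrow> conn (fst (run_IC N \<delta> c f k Ef (h, K) es)) a b) \<and>
    (\<forall>a b. a \<noteq> b \<longrightarrow> conn (fst (run_IC N \<delta> c f k Ef (h, K) es)) a b \<longrightarrow> snd (run_IC N \<delta> c f k Ef (h, K) es) a b)"
proof (induction es arbitrary: h K)
  case Nil
  have e: "run_IC N \<delta> c f k Ef (h, K) [] = (h, K)" by (simp add: run_Nil)
  show ?case unfolding e fst_conv snd_conv edges_Nil Un_empty_right using Nil.prems(2,3) by (intro conjI refl)
next
  case (Cons x es)
  obtain i j where x: "x = (i, j)" by (cases x)
  let ?V = "\<lambda>a b. if K a b then f (k b) else Ef"
  have ij: "i < N" "j < N" "i \<noteq> j" "\<not> conn h i j" and g: "goodP1 N (insert {i, j} h) es"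
    using Cons.prems(1) x by auto
  have nji: "\<not> conn h j i" using ij(4) conn_sym by metis
  have Kij: "\<not> K i j" "\<not> K j i" using Cons.prems(2) ij(4) nji by blast+
  have vn: "0 \<le> ?V a b" if "b < N" for a b using fp[OF that] Ef by simp
  have a1: "agrees N \<delta> c (?V i) h i j"
    by (rule agree_new[OF d ij(3) ij(2) ij(4)]) (use vn Kij Ef in simp_all)
  have a2: "agrees N \<delta> c (?V j) h j i"
    by (rule agree_new[OF d ij(3)[symmetric] ij(1) nji]) (use vn Kij Ef in simp_all)
  have dec: "decide N \<delta> c ?V h i j = insert {i, j} h" by (rule decide_agree[OF a1 a2])
  define K' where "K' = (\<lambda>a b. K a b \<or> conn (insert {i, j} h) a b)"
  have st: "step_IC N \<delta> c f k Ef (h, K) (i, j) = (insert {i, j} h, K')"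
    unfolding step_IC_simp dec K'_def ..
  have hs: "h \<subseteq> insert {i, j} h" by blast
  have i1: "\<forall>a b. K' a b \<longrightarrow> conn (insert {i, j} h) a b"
    unfolding K'_def using Cons.prems(2) conn_mono[OF _ hs] by simp
  have i2: "\<forall>a b. a \<noteq> b \<longrightarrow> conn (insert {i, j} h) a b \<longrightarrow> K' a b"
    unfolding K'_def by simp
  have e: "h \<union> edges ((i, j) # es) = insert {i, j} h \<union> edges es" by simp
  show ?case unfolding x run_Cons st e by (rule Cons.IH[OF g i1 i2])
qed



lemma phase2:
  assumes good: "\<forall>(i, j)\<in>set es. i < N \<and> j < N \<and> i \<noteq> j \<and> {i, j} \<in> g \<and>
      (\<forall>h. P \<subseteq> h \<longrightarrow> h \<subseteq> g \<longrightarrow> decide N \<delta> c (\<lambda>_ b. f (k b)) h i j = insert {i, j} h)"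
  shows "P \<subseteq> h \<Longrightarrow> h \<subseteq> g \<Longrightarrow> (\<forall>a b. a < N \<longrightarrow> b < N \<longrightarrow> a \<noteq> b \<longrightarrow> K a b) \<Longrightarrow>
    fst (run_IC N \<delta> c f k Ef (h, K) es) = h \<union> edges es \<and>
    (\<forall>a b. a < N \<longrightarrow> b < N \<longrightarrow> a \<noteq> b \<longrightarrow> snd (run_IC N \<delta> c f k Ef (h, K) es) a b) \<and>
    valid_path N es"
  using good
proof (induction es arbitrary: h K)
  case Nil
  then show ?case by (simp add: run_Nil valid_path_def)
next
  case (Cons x es)
  obtain i j where x: "x = (i, j)" by (cases x)
  have ij: "i < N" "j < N" "i \<noteq> j" "{i, j} \<in> g"
    and dd: "decide N \<delta> c (\<lambda>_ b. f (k b)) h i j = insert {i, j} h"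
    using Cons.prems x by auto
  let ?V = "\<lambda>a b. if K a b then f (k b) else Ef"
  have "decide N \<delta> c ?V h i j = decide N \<delta> c (\<lambda>_ b. f (k b)) h i j"
    by (rule decide_cong) (use Cons.prems(3) ij in auto)
  then have dec: "decide N \<delta> c ?V h i j = insert {i, j} h" using dd by simp
  define K' where "K' = (\<lambda>a b. K a b \<or> conn (insert {i, j} h) a b)"
  have st: "step_IC N \<delta> c f k Ef (h, K) (i, j) = (insert {i, j} h, K')"
    unfolding step_IC_simp dec K'_def ..
  have p1: "P \<subseteq> insert {i, j} h" "insert {i, j} h \<subseteq> g" using Cons.prems ij by auto
  have p3: "\<forall>a b. a < N \<longrightarrow> b < N \<longrightarrow> a \<noteq> b \<longrightarrow> K' a b" using Cons.prems(3) unfolding K'_def by blast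
  have e: "h \<union> edges ((i, j) # es) = insert {i, j} h \<union> edges es" by simp
  have g4: "\<forall>(i, j)\<in>set es. i < N \<and> j < N \<and> i \<noteq> j \<and> {i, j} \<in> g \<and>
      (\<forall>h. P \<subseteq> h \<longrightarrow> h \<subseteq> g \<longrightarrow> decide N \<delta> c (\<lambda>_ b. f (k b)) h i j = insert {i, j} h)"
    using Cons.prems(4) by simp
  note IH = Cons.IH[OF p1 p3 g4]
  show ?case unfolding x run_Cons st e valid_Cons using IH ij by simp
qed

lemma stable_from:
  assumes stab: "stable_CI N \<delta> c f k g"
  shows "(\<forall>a b. a < N \<longrightarrow> b < N \<longrightarrow> a \<noteq> b \<longrightarrow> K a b) \<Longrightarrow> valid_path N p \<Longrightarrow>
     fst (run_IC N \<delta> c f k Ef (g, K) p) = g"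
proof (induction p arbitrary: K)
  case Nil
  then show ?case by (simp add: run_Nil)
next
  case (Cons x p)
  obtain i j where x: "x = (i, j)" by (cases x)
  have ij: "i < N" "j < N" "i \<noteq> j" and vp: "valid_path N p" using Cons.prems(2) x by (auto simp: valid_Cons)
  let ?V = "\<lambda>a b. if K a b then f (k b) else Ef"
  have "decide N \<delta> c ?V g i j = decide N \<delta> c (\<lambda>_ b. f (k b)) g i j"
    by (rule decide_cong) (use Cons.prems(1) ij in auto)
  then have dec: "decide N \<delta> c ?V g i j = g" using stab ij unfolding stable_CI_def by simp
  define K' where "K' = (\<lambda>a b. K a b \<or> conn g a b)"
  have st: "step_IC N \<delta> c f k Ef (g, K) (i, j) = (g, K')"
    unfolding step_IC_simp dec K'_def ..
  have p3: "\<forall>a b. a < N \<longrightarrow> b < N \<longrightarrow> a \<noteq> b \<longrightarrow> K' a b" using Cons.prems(1) unfolding K'_def by blast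
  show ?case unfolding x run_Cons st using Cons.IH[OF p3 vp] .
qed

lemma in_G_IC:
  assumes stab: "stable_CI N \<delta> c f k g" and vp: "valid_path N p"
    and r: "fst (run_IC N \<delta> c f k Ef init_state p) = g"
    and K: "\<forall>a b. a < N \<longrightarrow> b < N \<longrightarrow> a \<noteq> b \<longrightarrow> snd (run_IC N \<delta> c f k Ef init_state p) a b"
  shows "g \<in> G_IC N \<delta> c f k Ef"
proof -
  obtain K0 where s: "run_IC N \<delta> c f k Ef init_state p = (g, K0)" using r by (cases "run_IC N \<delta> c f k Ef init_state p") auto
  have "stable_IC N \<delta> c f k Ef (g, K0)"
    unfolding stable_IC_def using stable_from[OF stab, of K0] K s by simp
  then show ?thesis unfolding G_IC_def using vp s by auto
qed



lemma conn_empty: "conn {} a b \<longleftrightarrow> a = b"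
proof
  assume "conn {} a b"
  then obtain n where "walk {} a b n" unfolding conn_def by blast
  then show "a = b" by (cases n) auto
qed (simp add: conn_refl)

lemma conn_single: "conn {{i, j}} i b \<Longrightarrow> b = i \<or> b = j"
proof (rule ccontr)
  assume c: "conn {{i, j}} i b" and n: "\<not> (b = i \<or> b = j)"
  then have "isol {{i, j}} b" unfolding isol_def by auto
  then have "i = b" using isol_conn c by blast
  then show False using n by simp
qed

context
  fixes N :: nat and \<delta> c :: real and f :: "'x \<Rightarrow> real" and k :: "nat \<Rightarrow> 'x" and Ef :: real
  assumes stab0: "stable_CI N \<delta> c f k {}"
    and d: "0 \<le> \<delta>" "\<delta> \<le> 1" and fp: "\<And>b. b < N \<Longrightarrow> 0 < f (k b)" and Ef: "c \<le> Ef" "0 \<le> Ef"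
begin

lemma dec_known:
  assumes ij: "i < N" "j < N" "i \<noteq> j" and K: "K i j" "K j i"
    and h1: "insert {i, j} h = {{i, j}}" and h2: "h - {{i, j}} = {}"
  shows "decide N \<delta> c (\<lambda>a b. if K a b then f (k b) else Ef) h i j = {}"
proof -
  have "decide N \<delta> c (\<lambda>a b. if K a b then f (k b) else Ef) h i j = decide N \<delta> c (\<lambda>_ b. f (k b)) h i j"
  proof (rule decide_cong)
    fix b assume "b < N" "b \<noteq> i" "conn (insert {i, j} h) i b"
    then have "conn {{i, j}} i b" using h1 by simp
    then have "b = i \<or> b = j" by (rule conn_single)
    then have "b = j" using \<open>b \<noteq> i\<close> by simp
    then show "(if K i b then f (k b) else Ef) = f (k b)" using K by simp
  next
    fix b assume "b < N" "b \<noteq> j" "conn (insert {j, i} h) j b"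
    then have "conn {{j, i}} j b" using h1 by (simp add: insert_commute)
    then have "b = j \<or> b = i" by (rule conn_single)
    then have "b = i" using \<open>b \<noteq> j\<close> by simp
    then show "(if K j b then f (k b) else Ef) = f (k b)" using K by simp
  qed
  also have "\<dots> = decide N \<delta> c (\<lambda>_ b. f (k b)) {} i j"
    by (rule decide_same) (use h1 h2 in auto)
  also have "\<dots> = {}" using stab0 ij unfolding stable_CI_def by simp
  finally show ?thesis .
qed

lemma empty_pair:
  assumes ij: "i < N" "j < N" "i \<noteq> j" and sym: "\<forall>a b. K a b = K b a"
  shows "fst (run_IC N \<delta> c f k Ef ({}, K) [(i, j), (i, j)]) = {} \<and>
    (\<forall>a b. K a b \<longrightarrow> snd (run_IC N \<delta> c f k Ef ({}, K) [(i, j), (i, j)]) a b) \<and>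
    snd (run_IC N \<delta> c f k Ef ({}, K) [(i, j), (i, j)]) i j \<and>
    (\<forall>a b. snd (run_IC N \<delta> c f k Ef ({}, K) [(i, j), (i, j)]) a b = snd (run_IC N \<delta> c f k Ef ({}, K) [(i, j), (i, j)]) b a)"
proof (cases "K i j")
  case True
  then have Kj: "K j i" using sym by blast
  have d1: "decide N \<delta> c (\<lambda>a b. if K a b then f (k b) else Ef) {} i j = {}"
    by (rule dec_known[OF ij True Kj]) auto
  define K1 where "K1 = (\<lambda>a b. K a b \<or> conn {} a b)"
  have s1: "step_IC N \<delta> c f k Ef ({}, K) (i, j) = ({}, K1)" unfolding step_IC_simp d1 K1_def ..
  have d2: "decide N \<delta> c (\<lambda>a b. if K1 a b then f (k b) else Ef) {} i j = {}"
    by (rule dec_known[OF ij]) (auto simp: K1_def True Kj)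
  define K2 where "K2 = (\<lambda>a b. K1 a b \<or> conn {} a b)"
  have s2: "step_IC N \<delta> c f k Ef ({}, K1) (i, j) = ({}, K2)" unfolding step_IC_simp d2 K2_def ..
  have r: "run_IC N \<delta> c f k Ef ({}, K) [(i, j), (i, j)] = ({}, K2)"
    unfolding run_Cons s1 s2 run_Nil ..
  show ?thesis unfolding r using sym True by (auto simp: K2_def K1_def conn_empty)
next
  case False
  then have Kj: "\<not> K j i" using sym by blast
  let ?V = "\<lambda>a b. if K a b then f (k b) else Ef"
  have vn: "0 \<le> ?V a b" if "b < N" for a b using fp[OF that] Ef by simp
  have nc: "\<not> conn {} i j" "\<not> conn {} j i" using ij by (auto simp: conn_empty)
  have a1: "agrees N \<delta> c (?V i) {} i j"
    by (rule agree_new[OF d ij(3) ij(2) nc(1)]) (use vn False Ef in simp_all)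
  have a2: "agrees N \<delta> c (?V j) {} j i"
    by (rule agree_new[OF d ij(3)[symmetric] ij(1) nc(2)]) (use vn Kj Ef in simp_all)
  have d1: "decide N \<delta> c ?V {} i j = {{i, j}}" using decide_agree[OF a1 a2] by simp
  define K1 where "K1 = (\<lambda>a b. K a b \<or> conn {{i, j}} a b)"
  have s1: "step_IC N \<delta> c f k Ef ({}, K) (i, j) = ({{i, j}}, K1)" unfolding step_IC_simp d1 K1_def ..
  have k1: "K1 i j" "K1 j i" unfolding K1_def using conn_edge[of i j "{{i, j}}"] conn_edge[of j i "{{i, j}}"]
    by (auto simp: insert_commute)
  have d2: "decide N \<delta> c (\<lambda>a b. if K1 a b then f (k b) else Ef) {{i, j}} i j = {}"
    by (rule dec_known[OF ij k1]) auto
  define K2 where "K2 = (\<lambda>a b. K1 a b \<or> conn {} a b)"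
  have s2: "step_IC N \<delta> c f k Ef ({{i, j}}, K1) (i, j) = ({}, K2)" unfolding step_IC_simp d2 K2_def ..
  have r: "run_IC N \<delta> c f k Ef ({}, K) [(i, j), (i, j)] = ({}, K2)"
    unfolding run_Cons s1 s2 run_Nil ..
  have "\<forall>a b. K2 a b = K2 b a" unfolding K2_def K1_def using sym conn_sym by blast
  then show ?thesis unfolding r using k1 by (auto simp: K2_def K1_def)
qed

lemma empty_all:
  "\<forall>(i, j)\<in>set ps. i < N \<and> j < N \<and> i \<noteq> j \<Longrightarrow> \<forall>a b. K a b = K b a \<Longrightarrow>
    fst (run_IC N \<delta> c f k Ef ({}, K) (concat (map (\<lambda>x. [x, x]) ps))) = {} \<and>
    (\<forall>a b. K a b \<longrightarrow> snd (run_IC N \<delta> c f k Ef ({}, K) (concat (map (\<lambda>x. [x, x]) ps))) a b) \<and>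
    (\<forall>(i, j)\<in>set ps. snd (run_IC N \<delta> c f k Ef ({}, K) (concat (map (\<lambda>x. [x, x]) ps))) i j)"
proof (induction ps arbitrary: K)
  case Nil
  show ?case by (simp add: run_Nil)
next
  case (Cons x ps)
  obtain i j where x: "x = (i, j)" by (cases x)
  have ij: "i < N" "j < N" "i \<noteq> j" using Cons.prems x by auto
  obtain K1 where s: "run_IC N \<delta> c f k Ef ({}, K) [(i, j), (i, j)] = ({}, K1)"
    and K1: "\<forall>a b. K a b \<longrightarrow> K1 a b" "K1 i j" "\<forall>a b. K1 a b = K1 b a"
  proof -
    obtain h1 K1 where s0: "run_IC N \<delta> c f k Ef ({}, K) [(i, j), (i, j)] = (h1, K1)" by fastforce
    show ?thesis using that[of K1] empty_pair[OF ij Cons.prems(2)] unfolding s0 fst_conv snd_conv by blast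
  qed
  have ps: "\<forall>(i, j)\<in>set ps. i < N \<and> j < N \<and> i \<noteq> j" using Cons.prems(1) by simp
  note IH = Cons.IH[OF ps K1(3)]
  have cc: "concat (map (\<lambda>x. [x, x]) (x # ps)) = [(i, j), (i, j)] @ concat (map (\<lambda>x. [x, x]) ps)"
    unfolding x by simp
  have e: "run_IC N \<delta> c f k Ef ({}, K) (concat (map (\<lambda>x. [x, x]) (x # ps)))
     = run_IC N \<delta> c f k Ef ({}, K1) (concat (map (\<lambda>x. [x, x]) ps))"
    unfolding cc run_append s ..
  have r1: "fst (run_IC N \<delta> c f k Ef ({}, K1) (concat (map (\<lambda>x. [x, x]) ps))) = {}" using IH by blast
  have r2: "\<forall>a b. K a b \<longrightarrow> snd (run_IC N \<delta> c f k Ef ({}, K1) (concat (map (\<lambda>x. [x, x]) ps))) a b"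
    using IH K1(1) by blast
  have r3: "snd (run_IC N \<delta> c f k Ef ({}, K1) (concat (map (\<lambda>x. [x, x]) ps))) i j"
    using IH K1(2) by blast
  have r4: "\<forall>(i, j)\<in>set ps. snd (run_IC N \<delta> c f k Ef ({}, K1) (concat (map (\<lambda>x. [x, x]) ps))) i j"
    using IH by blast
  show ?case unfolding e using r1 r2 r3 r4 x by auto
qed

end



lemma stab_agree:
  assumes stab: "stable_CI N \<delta> c f k g" and e: "{i, j} \<in> g" and ij: "i < N" "j < N" "i \<noteq> j"
  shows "agrees N \<delta> c (\<lambda>b. f (k b)) g i j \<and> agrees N \<delta> c (\<lambda>b. f (k b)) g j i"
proof (rule ccontr)
  assume n: "\<not> ?thesis"
  have "decide N \<delta> c (\<lambda>_ b. f (k b)) g i j = g" using stab ij unfolding stable_CI_def by simp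
  then have "g - {{i, j}} = g" using n unfolding decide_def by simp
  then show False using e by blast
qed

lemma LS1: "distinct ps \<Longrightarrow> \<forall>p\<in>set ps. p < N \<and> A p < N \<and> A p \<noteq> p \<and> A p \<notin> set ps \<and> isol h p \<Longrightarrow>
  goodP1 N h (map (\<lambda>p. (A p, p)) ps)"
proof (induction ps arbitrary: h)
  case Nil
  then show ?case by simp
next
  case (Cons p ps)
  have p: "p < N" "A p < N" "A p \<noteq> p" "isol h p" using Cons.prems by auto
  have nc: "\<not> conn h (A p) p" using isol_conn[OF p(4)] p(3) by blast
  have r: "\<forall>q\<in>set ps. q < N \<and> A q < N \<and> A q \<noteq> q \<and> A q \<notin> set ps \<and> isol (insert {A p, p} h) q"
    using Cons.prems by (auto simp: isol_insert)
  have "goodP1 N (insert {A p, p} h) (map (\<lambda>p. (A p, p)) ps)"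
    using Cons.IH[OF _ r] Cons.prems(1) by simp
  then show ?case using p nc by simp
qed

definition cstruct :: "nat \<Rightarrow> nat set set \<Rightarrow> nat set \<Rightarrow> (nat \<Rightarrow> nat) \<Rightarrow> bool" where
  "cstruct N g C anc \<longleftrightarrow> C \<subseteq> {..<N} \<and> C \<noteq> {} \<and> (\<forall>p. p < N \<longrightarrow> p \<notin> C \<longrightarrow> anc p \<in> C) \<and>
     g = {{a, b} | a b. a \<in> C \<and> b \<in> C \<and> a \<noteq> b} \<union> {{anc p, p} | p. p < N \<and> p \<notin> C}"

lemma cs_noedge:
  assumes cs: "cstruct N g C anc" and a: "a \<in> C" and x: "x \<notin> C" "anc x \<noteq> a"
  shows "{a, x} \<notin> g"
proof
  assume "{a, x} \<in> g"
  then have "(\<exists>a' b'. {a, x} = {a', b'} \<and> a' \<in> C \<and> b' \<in> C) \<or> (\<exists>p. {a, x} = {anc p, p} \<and> p \<notin> C)"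
    using cs unfolding cstruct_def by blast
  then show False
  proof
    assume "\<exists>a' b'. {a, x} = {a', b'} \<and> a' \<in> C \<and> b' \<in> C"
    then show False using x a by (auto simp: doubleton_eq_iff)
  next
    assume "\<exists>p. {a, x} = {anc p, p} \<and> p \<notin> C"
    then obtain p where "{a, x} = {anc p, p}" "p \<notin> C" by blast
    then show False using x a by (auto simp: doubleton_eq_iff)
  qed
qed

lemma cs_clique: "cstruct N g C anc \<Longrightarrow> a \<in> C \<Longrightarrow> b \<in> C \<Longrightarrow> a \<noteq> b \<Longrightarrow> {a, b} \<in> g"
  unfolding cstruct_def by blast

lemma cs_per: "cstruct N g C anc \<Longrightarrow> p < N \<Longrightarrow> p \<notin> C \<Longrightarrow> {anc p, p} \<in> g"
  unfolding cstruct_def by blast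

lemma core_agree:
  assumes cs: "cstruct N g C anc" and stab: "stable_CI N \<delta> c f k g"
    and d: "0 \<le> \<delta>" "\<delta> \<le> 1" and fp: "\<And>b. b < N \<Longrightarrow> 0 < f (k b)"
    and ab: "a \<in> C" "b \<in> C" "a \<noteq> b"
    and hP: "{{anc p, p} | p. p < N \<and> p \<notin> C} \<subseteq> h" and hg: "h \<subseteq> g"
  shows "agrees N \<delta> c (\<lambda>b. f (k b)) h a b"
proof -
  have CN: "C \<subseteq> {..<N}" and anc: "\<And>p. p < N \<Longrightarrow> p \<notin> C \<Longrightarrow> anc p \<in> C" using cs unfolding cstruct_def by auto
  have abN: "a < N" "b < N" using ab CN by auto
  have e: "{a, b} \<in> g" using cs_clique[OF cs ab] .
  have ag: "agrees N \<delta> c (\<lambda>b. f (k b)) g a b" using stab_agree[OF stab e abN ab(3)] by blast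
  show ?thesis
  proof (rule agree_sub[OF d ab(3) abN(2) hg e _ ag])
    show "\<And>x. x < N \<Longrightarrow> 0 \<le> f (k x)" using fp by (simp add: less_imp_le)
  next
    fix x assume x: "x < N" "x \<noteq> a"
    let ?gm = "g - {{a, b}}" and ?hp = "insert {a, b} h"
    show "wt \<delta> g a x \<le> wt \<delta> ?hp a x \<or> wt \<delta> g a x \<le> wt \<delta> ?gm a x"
    proof (cases "x \<in> C")
      case True
      show ?thesis
      proof (cases "x = b")
        case True
        have "wt \<delta> g a x \<le> 1" by (rule wt_le1[OF d]) (use x in simp)
        moreover have "1 \<le> wt \<delta> ?hp a x" by (rule wt_edge[OF d]) (simp add: True)
        ultimately show ?thesis by simp
      next
        case False
        have "wt \<delta> g a x \<le> 1" by (rule wt_le1[OF d]) (use x in simp)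
        moreover have "{a, x} \<in> ?gm" using cs_clique[OF cs ab(1) \<open>x \<in> C\<close>] x False ab
          by (auto simp: doubleton_eq_iff)
        then have "1 \<le> wt \<delta> ?gm a x" by (rule wt_edge[OF d])
        ultimately show ?thesis by simp
      qed
    next
      case False
      have yC: "anc x \<in> C" using anc x False by simp
      have xb: "x \<noteq> b" using False ab by blast
      have per: "{anc x, x} \<in> g" using cs_per[OF cs x(1) False] .
      show ?thesis
      proof (cases "anc x = a")
        case True
        have "wt \<delta> g a x \<le> 1" by (rule wt_le1[OF d]) (use x in simp)
        moreover have "{a, x} \<in> ?gm" using per True xb x by (auto simp: doubleton_eq_iff)
        then have "1 \<le> wt \<delta> ?gm a x" by (rule wt_edge[OF d])
        ultimately show ?thesis by simp
      next
        case na: False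
        have ne: "{a, x} \<notin> g" by (rule cs_noedge[OF cs ab(1) False na])
        have le: "wt \<delta> g a x \<le> \<delta>" by (rule wt_noedge[OF d]) (use x ne in auto)
        show ?thesis
        proof (cases "anc x = b")
          case True
          have "{b, x} \<in> h" using hP x False True by blast
          then have "\<delta> \<le> wt \<delta> ?hp a x" using wt_two[OF d, of a b ?hp x] by simp
          then show ?thesis using le by simp
        next
          case False
          have "{a, anc x} \<in> ?gm" using cs_clique[OF cs ab(1) yC] na False ab
            by (auto simp: doubleton_eq_iff)
          moreover have "{anc x, x} \<in> ?gm" using per xb na x by (auto simp: doubleton_eq_iff)
          ultimately have "\<delta> \<le> wt \<delta> ?gm a x" by (rule wt_two[OF d])
          then show ?thesis using le by simp
        qed
      qed
    qed
  qed
qed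



lemma conn_all_from:
  assumes "\<And>x. x < N \<Longrightarrow> conn g c0 x"
  shows "\<forall>a b. a < N \<longrightarrow> b < N \<longrightarrow> conn g a b"
  using assms conn_sym conn_trans by metis

lemma phase1':
  assumes d: "0 \<le> \<delta>" "\<delta> \<le> 1" and fp: "\<And>b. b < N \<Longrightarrow> 0 < f (k b)" and Ef: "c \<le> Ef" "0 \<le> Ef"
    and g: "goodP1 N (fst s) es" and i1: "\<forall>a b. snd s a b \<longrightarrow> conn (fst s) a b"
    and i2: "\<forall>a b. a \<noteq> b \<longrightarrow> conn (fst s) a b \<longrightarrow> snd s a b"
  shows "fst (run_IC N \<delta> c f k Ef s es) = fst s \<union> edges es \<and>
    (\<forall>a b. snd (run_IC N \<delta> c f k Ef s es) a b \<longrightarrow> conn (fst (run_IC N \<delta> c f k Ef s es)) a b) \<and>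
    (\<forall>a b. a \<noteq> b \<longrightarrow> conn (fst (run_IC N \<delta> c f k Ef s es)) a b \<longrightarrow> snd (run_IC N \<delta> c f k Ef s es) a b)"
proof -
  have s: "s = (fst s, snd s)" by simp
  note r = phase1[where h="fst s" and K="snd s" and f=f and k=k and N=N and \<delta>=\<delta> and c=c and Ef=Ef, OF d fp Ef g i1 i2]
  show ?thesis using r s by metis
qed

theorem core_main:
  assumes cs: "cstruct N g C anc" and stab: "stable_CI N \<delta> c f k g"
    and d: "0 \<le> \<delta>" "\<delta> \<le> 1" and fp: "\<And>b. b < N \<Longrightarrow> 0 < f (k b)" and Ef: "c \<le> Ef" "0 \<le> Ef"
  shows "g \<in> G_IC N \<delta> c f k Ef"
proof -
  have CN: "C \<subseteq> {..<N}" and Cne: "C \<noteq> {}" and anc: "\<And>p. p < N \<Longrightarrow> p \<notin> C \<Longrightarrow> anc p \<in> C"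
    and gdef: "g = {{a, b} | a b. a \<in> C \<and> b \<in> C \<and> a \<noteq> b} \<union> {{anc p, p} | p. p < N \<and> p \<notin> C}"
    using cs unfolding cstruct_def by auto
  obtain c0 where c0: "c0 \<in> C" using Cne by blast
  have c0N: "c0 < N" using c0 CN by auto
  define L where "L = filter (\<lambda>x. x \<in> C \<and> x \<noteq> c0) [0..<N]"
  define Q where "Q = filter (\<lambda>p. p \<notin> C) [0..<N]"
  define ps1 where "ps1 = map (\<lambda>p. ((\<lambda>_. c0) p, p)) L"
  define ps2 where "ps2 = map (\<lambda>p. (anc p, p)) Q"
  define ps3 where "ps3 = filter (\<lambda>(a, b). a < b) (List.product L L)"
  have setL: "set L = C - {c0}" unfolding L_def using CN by auto
  have setQ: "set Q = {p. p < N \<and> p \<notin> C}" unfolding Q_def by auto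
  have E1': "edges ps1 = (\<lambda>x. {c0, x}) ` (C - {c0})" unfolding ps1_def edges_def setL[symmetric]
    by (simp add: image_image)
  have E1: "edges ps1 = {{c0, x} | x. x \<in> C \<and> x \<noteq> c0}" unfolding E1' by blast
  have E2': "edges ps2 = (\<lambda>p. {anc p, p}) ` {p. p < N \<and> p \<notin> C}" unfolding ps2_def edges_def setQ[symmetric]
    by (simp add: image_image)
  have E2: "edges ps2 = {{anc p, p} | p. p < N \<and> p \<notin> C}" unfolding E2' by blast
  have E3': "edges ps3 = (\<lambda>(a, b). {a, b}) ` {(a, b). a \<in> C - {c0} \<and> b \<in> C - {c0} \<and> a < b}"
    unfolding ps3_def edges_def by (simp add: setL) blast
  have E3: "edges ps3 = {{a, b} | a b. a \<in> C - {c0} \<and> b \<in> C - {c0} \<and> a < b}"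
    unfolding E3' by auto
  have g1: "goodP1 N {} ps1" unfolding ps1_def
    by (rule LS1) (auto simp: L_def isol_def c0N)
  have isF1: "isol (edges ps1) p" if "p \<notin> C" for p
    unfolding isol_def E1 using that c0 by auto
  have g2: "goodP1 N (edges ps1) ps2" unfolding ps2_def
  proof (rule LS1)
    show "distinct Q" unfolding Q_def by simp
    show "\<forall>p\<in>set Q. p < N \<and> anc p < N \<and> anc p \<noteq> p \<and> anc p \<notin> set Q \<and> isol (edges ps1) p"
      unfolding setQ using anc CN isF1 by fastforce
  qed
  define s1 where "s1 = run_IC N \<delta> c f k Ef init_state ps1"
  have g1': "goodP1 N (fst init_state) ps1" using g1 by (simp add: init_state_def)
  have i1: "\<forall>a b. snd init_state a b \<longrightarrow> conn (fst init_state) a b" by (simp add: init_state_def)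
  have i2: "\<forall>a b. a \<noteq> b \<longrightarrow> conn (fst init_state) a b \<longrightarrow> snd init_state a b"
    by (simp add: init_state_def conn_empty)
  have e1: "fst init_state \<union> edges ps1 = edges ps1" by (simp add: init_state_def)
  note r1 = phase1'[where f=f and k=k and N=N and c=c and Ef=Ef and \<delta>=\<delta>, OF d fp Ef g1' i1 i2]
  have P1: "fst s1 = edges ps1 \<and> (\<forall>a b. snd s1 a b \<longrightarrow> conn (fst s1) a b) \<and>
      (\<forall>a b. a \<noteq> b \<longrightarrow> conn (fst s1) a b \<longrightarrow> snd s1 a b)"
    by (rule r1[unfolded s1_def[symmetric] e1])
  define s2 where "s2 = run_IC N \<delta> c f k Ef s1 ps2"
  have g2': "goodP1 N (fst s1) ps2" using g2 P1 by simp
  have j1: "\<forall>a b. snd s1 a b \<longrightarrow> conn (fst s1) a b" using P1 by blast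
  have j2: "\<forall>a b. a \<noteq> b \<longrightarrow> conn (fst s1) a b \<longrightarrow> snd s1 a b" using P1 by blast
  have e2: "fst s1 \<union> edges ps2 = edges ps1 \<union> edges ps2" using P1 by simp
  note r2 = phase1'[where f=f and k=k and N=N and c=c and Ef=Ef and \<delta>=\<delta>, OF d fp Ef g2' j1 j2]
  have P2: "fst s2 = edges ps1 \<union> edges ps2 \<and> (\<forall>a b. snd s2 a b \<longrightarrow> conn (fst s2) a b) \<and>
      (\<forall>a b. a \<noteq> b \<longrightarrow> conn (fst s2) a b \<longrightarrow> snd s2 a b)"
    by (rule r2[unfolded s2_def[symmetric] e2])
  have cc: "conn (fst s2) c0 x" if "x < N" for x
  proof (cases "x \<in> C")
    case True
    show ?thesis
    proof (cases "x = c0")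
      case True then show ?thesis by (simp add: conn_refl)
    next
      case False
      have "{c0, x} \<in> fst s2" using P2 E1 True False by blast
      then show ?thesis by (rule conn_edge)
    qed
  next
    case False
    have y: "anc x \<in> C" using anc that False by simp
    have c1: "conn (fst s2) c0 (anc x)"
    proof (cases "anc x = c0")
      case True then show ?thesis by (simp add: conn_refl)
    next
      case False
      have "{c0, anc x} \<in> fst s2" using P2 E1 y False by blast
      then show ?thesis by (rule conn_edge)
    qed
    have "{anc x, x} \<in> fst s2" using P2 E2 that False by blast
    then show ?thesis using c1 conn_edge conn_trans by metis
  qed
  have Kall: "\<forall>a b. a < N \<longrightarrow> b < N \<longrightarrow> a \<noteq> b \<longrightarrow> snd s2 a b"
    using conn_all_from[of N "fst s2" c0] cc P2 by blast
  have s2eq: "s2 = (fst s2, snd s2)" by simp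
  have sub1: "edges ps2 \<subseteq> fst s2" "fst s2 \<subseteq> g" using P2 unfolding E1 E2 gdef using c0 by auto
  have good3: "\<forall>(a, b)\<in>set ps3. a < N \<and> b < N \<and> a \<noteq> b \<and> {a, b} \<in> g \<and>
      (\<forall>h. edges ps2 \<subseteq> h \<longrightarrow> h \<subseteq> g \<longrightarrow> decide N \<delta> c (\<lambda>_ b. f (k b)) h a b = insert {a, b} h)"
  proof (clarify)
    fix a b assume ab: "(a, b) \<in> set ps3"
    then have abC: "a \<in> C" "b \<in> C" "a \<noteq> b" unfolding ps3_def using setL by auto
    have abN: "a < N" "b < N" using abC CN by auto
    have dd: "decide N \<delta> c (\<lambda>_ b. f (k b)) h a b = insert {a, b} h" if "edges ps2 \<subseteq> h" "h \<subseteq> g" for h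
    proof (rule decide_agree)
      show "agrees N \<delta> c (\<lambda>b. f (k b)) h a b"
        by (rule core_agree[OF cs stab d fp abC]) (use that E2 in auto)
      show "agrees N \<delta> c (\<lambda>b. f (k b)) h b a"
        by (rule core_agree[OF cs stab d fp abC(2,1) abC(3)[symmetric]]) (use that E2 in auto)
    qed
    show "a < N \<and> b < N \<and> a \<noteq> b \<and> {a, b} \<in> g \<and>
      (\<forall>h. edges ps2 \<subseteq> h \<longrightarrow> h \<subseteq> g \<longrightarrow> decide N \<delta> c (\<lambda>_ b. f (k b)) h a b = insert {a, b} h)"
      using abN abC cs_clique[OF cs abC] dd by blast
  qed
  define s3 where "s3 = run_IC N \<delta> c f k Ef s2 ps3"
  have P3: "fst s3 = fst s2 \<union> edges ps3 \<and> (\<forall>a b. a < N \<longrightarrow> b < N \<longrightarrow> a \<noteq> b \<longrightarrow> snd s3 a b) \<and> valid_path N ps3"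
  proof -
    note r3 = phase2[where f=f and k=k and N=N and c=c and \<delta>=\<delta> and Ef=Ef and h="fst s2" and K="snd s2", OF good3 sub1 Kall]
    have e3: "(fst s2, snd s2) = s2" by simp
    show ?thesis by (rule r3[unfolded e3 s3_def[symmetric]])
  qed
  have fin: "fst s3 = g"
  proof -
    have "fst s3 = edges ps1 \<union> edges ps2 \<union> edges ps3" using P3 P2 by simp
    also have "\<dots> = g"
    proof
      show "edges ps1 \<union> edges ps2 \<union> edges ps3 \<subseteq> g" unfolding E1 E2 E3 gdef using c0 by auto
      show "g \<subseteq> edges ps1 \<union> edges ps2 \<union> edges ps3"
      proof
        fix e assume "e \<in> g"
        then consider (cl) a b where "e = {a, b}" "a \<in> C" "b \<in> C" "a \<noteq> b"
          | (pe) p where "e = {anc p, p}" "p < N" "p \<notin> C" unfolding gdef by blast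
        then show "e \<in> edges ps1 \<union> edges ps2 \<union> edges ps3"
        proof cases
          case cl
          show ?thesis
          proof (cases "a = c0 \<or> b = c0")
            case True
            then have "e \<in> edges ps1" unfolding E1 using cl by (auto simp: insert_commute)
            then show ?thesis by blast
          next
            case False
            have "e \<in> edges ps3"
            proof (cases "a < b")
              case True
              then show ?thesis unfolding E3 using cl False by blast
            next
              case nl: False
              then have "b < a" using cl(4) by simp
              moreover have "e = {b, a}" using cl(1) by (simp add: insert_commute)
              ultimately show ?thesis unfolding E3 using cl False by blast
            qed
            then show ?thesis by blast
          qed
        next
          case pe
          then show ?thesis unfolding E2 by blast
        qed
      qed
    qed
    finally show ?thesis .
  qed
  have run: "run_IC N \<delta> c f k Ef init_state (ps1 @ ps2 @ ps3) = s3"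
    unfolding s3_def s2_def s1_def run_append ..
  have vp: "valid_path N (ps1 @ ps2 @ ps3)"
    using goodP1_valid[OF g1] goodP1_valid[OF g2] P3 by (simp add: valid_append)
  show ?thesis by (rule in_G_IC[OF stab vp]) (use run fin P3 in auto)
qed



lemma last_edge:
  assumes stab: "stable_CI N \<delta> c f k g" and e: "{i, j} \<in> g" and ij: "i < N" "j < N" "i \<noteq> j"
    and h1: "insert {i, j} h = g" and h2: "h - {{i, j}} = g - {{i, j}}"
  shows "decide N \<delta> c (\<lambda>_ b. f (k b)) h i j = insert {i, j} h"
proof -
  have "decide N \<delta> c (\<lambda>_ b. f (k b)) h i j = decide N \<delta> c (\<lambda>_ b. f (k b)) g i j"
    by (rule decide_same) (use h1 h2 e in auto)
  also have "\<dots> = g" using stab ij unfolding stable_CI_def by simp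
  finally show ?thesis using h1 by simp
qed

lemma wheel_good:
  assumes inj: "inj_on \<sigma> {..<N}" and rng: "\<forall>m<N. \<sigma> m < N" and b: "b < N"
  shows "(\<forall>m. a < m \<and> m \<le> b \<longrightarrow> isol h (\<sigma> m)) \<Longrightarrow> goodP1 N h (map (\<lambda>m. (\<sigma> m, \<sigma> (Suc m))) [a..<b])"
proof (induction "b - a" arbitrary: a h)
  case 0
  then show ?case by simp
next
  case (Suc n)
  then have ab: "a < b" by simp
  have up: "[a..<b] = a # [Suc a..<b]" using ab by (simp add: upt_conv_Cons)
  have aN: "a < N" "Suc a < N" using ab b by auto
  have ne: "\<sigma> a \<noteq> \<sigma> (Suc a)" using inj aN by (metis inj_on_eq_iff lessThan_iff n_not_Suc_n)
  have is1: "isol h (\<sigma> (Suc a))" using Suc.prems ab by simp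
  have nc: "\<not> conn h (\<sigma> a) (\<sigma> (Suc a))" using isol_conn[OF is1] ne by blast
  have rest: "\<forall>m. Suc a < m \<and> m \<le> b \<longrightarrow> isol (insert {\<sigma> a, \<sigma> (Suc a)} h) (\<sigma> m)"
  proof (intro allI impI)
    fix m assume m: "Suc a < m \<and> m \<le> b"
    then have mN: "m < N" using b by simp
    have "\<sigma> m \<noteq> \<sigma> a" using inj mN aN m by (metis inj_on_eq_iff lessThan_iff Suc_lessD less_not_refl)
    moreover have "\<sigma> m \<noteq> \<sigma> (Suc a)" using inj mN aN m by (metis inj_on_eq_iff lessThan_iff less_not_refl)
    moreover have "isol h (\<sigma> m)" using Suc.prems m by simp
    ultimately show "isol (insert {\<sigma> a, \<sigma> (Suc a)} h) (\<sigma> m)" by (simp add: isol_insert)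
  qed
  have "goodP1 N (insert {\<sigma> a, \<sigma> (Suc a)} h) (map (\<lambda>m. (\<sigma> m, \<sigma> (Suc m))) [Suc a..<b])"
    using Suc.hyps(1)[of "Suc a"] Suc.hyps(2) rest by simp
  then show ?case unfolding up using rng aN ne nc by simp
qed



theorem wheel_main:
  assumes N2: "N \<ge> 2" and bij: "bij_betw \<sigma> {..<N} {..<N}"
    and gdef: "g = {{\<sigma> m, \<sigma> ((m + 1) mod N)} | m. m < N}"
    and stab: "stable_CI N \<delta> c f k g"
    and d: "0 \<le> \<delta>" "\<delta> \<le> 1" and fp: "\<And>b. b < N \<Longrightarrow> 0 < f (k b)" and Ef: "c \<le> Ef" "0 \<le> Ef"
  shows "g \<in> G_IC N \<delta> c f k Ef"
proof -
  have inj: "inj_on \<sigma> {..<N}" and img: "\<sigma> ` {..<N} = {..<N}" using bij unfolding bij_betw_def by auto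
  have rng: "\<forall>m<N. \<sigma> m < N" using img by auto
  define ps1 where "ps1 = map (\<lambda>m. (\<sigma> m, \<sigma> (Suc m))) [0..<N-1]"
  define F where "F = {{\<sigma> m, \<sigma> (Suc m)} | m. m < N - 1}"
  have EF: "edges ps1 = F" unfolding ps1_def F_def edges_def by auto
  have g1: "goodP1 N {} ps1" unfolding ps1_def
    by (rule wheel_good[OF inj rng]) (use N2 in \<open>auto simp: isol_def\<close>)
  define s1 where "s1 = run_IC N \<delta> c f k Ef init_state ps1"
  have g1': "goodP1 N (fst init_state) ps1" using g1 by (simp add: init_state_def)
  have i1: "\<forall>a b. snd init_state a b \<longrightarrow> conn (fst init_state) a b" by (simp add: init_state_def)
  have i2: "\<forall>a b. a \<noteq> b \<longrightarrow> conn (fst init_state) a b \<longrightarrow> snd init_state a b"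
    by (simp add: init_state_def conn_empty)
  have e1: "fst init_state \<union> edges ps1 = F" using EF by (simp add: init_state_def)
  note r1 = phase1'[where f=f and k=k and N=N and c=c and Ef=Ef and \<delta>=\<delta>, OF d fp Ef g1' i1 i2]
  have P1: "fst s1 = F \<and> (\<forall>a b. snd s1 a b \<longrightarrow> conn (fst s1) a b) \<and>
      (\<forall>a b. a \<noteq> b \<longrightarrow> conn (fst s1) a b \<longrightarrow> snd s1 a b)"
    by (rule r1[unfolded s1_def[symmetric] e1])
  have cm: "m < N \<Longrightarrow> conn F (\<sigma> 0) (\<sigma> m)" for m
  proof (induction m)
    case 0 then show ?case by (simp add: conn_refl)
  next
    case (Suc m)
    have "{\<sigma> m, \<sigma> (Suc m)} \<in> F" unfolding F_def using Suc.prems by auto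
    moreover have "conn F (\<sigma> 0) (\<sigma> m)" using Suc.IH Suc.prems by simp
    ultimately show ?case using conn_trans conn_edge by blast
  qed
  have cc: "conn F (\<sigma> 0) x" if "x < N" for x
  proof -
    have "x \<in> \<sigma> ` {..<N}" using img that by simp
    then obtain m where "m < N" "x = \<sigma> m" by auto
    then show ?thesis using cm by simp
  qed
  have Kall: "\<forall>a b. a < N \<longrightarrow> b < N \<longrightarrow> a \<noteq> b \<longrightarrow> snd s1 a b"
  proof -
    have ca: "\<forall>a b. a < N \<longrightarrow> b < N \<longrightarrow> conn F a b" by (rule conn_all_from) (rule cc)
    show ?thesis using ca P1 by simp
  qed
  define e where "e = {\<sigma> (N - 1), \<sigma> 0}"
  have n0: "N - 1 \<noteq> 0" "N - 1 < N" "0 < N" using N2 by auto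
  have ene: "\<sigma> (N - 1) \<noteq> \<sigma> 0"
  proof
    assume eq: "\<sigma> (N - 1) = \<sigma> 0"
    have "N - 1 = 0" by (rule inj_onD[OF inj eq]) (use n0 in auto)
    then show False using n0 by simp
  qed
  have gF: "g = insert e F"
  proof
    show "g \<subseteq> insert e F"
    proof
      fix x assume "x \<in> g"
      then obtain m where m: "m < N" "x = {\<sigma> m, \<sigma> ((m + 1) mod N)}" unfolding gdef by blast
      show "x \<in> insert e F"
      proof (cases "Suc m < N")
        case True
        then have "x = {\<sigma> m, \<sigma> (Suc m)}" using m by simp
        then show ?thesis unfolding F_def using True by auto
      next
        case False
        then have "m = N - 1" using m by simp
        then have "(m + 1) mod N = 0" using N2 by simp
        then show ?thesis unfolding e_def using m \<open>m = N - 1\<close> by simp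
      qed
    qed
    show "insert e F \<subseteq> g"
    proof
      fix x assume "x \<in> insert e F"
      then consider "x = e" | m where "m < N - 1" "x = {\<sigma> m, \<sigma> (Suc m)}" unfolding F_def by blast
      then show "x \<in> g"
      proof cases
        case 1
        have "((N - 1) + 1) mod N = 0" using N2 by simp
        then have "x = {\<sigma> (N - 1), \<sigma> (((N - 1) + 1) mod N)}" using 1 by (simp add: e_def)
        then show ?thesis unfolding gdef using n0 by blast
      next
        case 2
        then have "(m + 1) mod N = Suc m" by simp
        then have "x = {\<sigma> m, \<sigma> ((m + 1) mod N)}" using 2 by simp
        moreover have "m < N" using 2 by simp
        ultimately show ?thesis unfolding gdef by blast
      qed
    qed
  qed
  define ps2 where "ps2 = [(\<sigma> (N - 1), \<sigma> 0)]"
  have good2: "\<forall>(i, j)\<in>set ps2. i < N \<and> j < N \<and> i \<noteq> j \<and> {i, j} \<in> g \<and>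
      (\<forall>h. F \<subseteq> h \<longrightarrow> h \<subseteq> g \<longrightarrow> decide N \<delta> c (\<lambda>_ b. f (k b)) h i j = insert {i, j} h)"
  proof -
    have eg: "e \<in> g" using gF by simp
    have "decide N \<delta> c (\<lambda>_ b. f (k b)) h (\<sigma> (N - 1)) (\<sigma> 0) = insert e h" if "F \<subseteq> h" "h \<subseteq> g" for h
      unfolding e_def
      by (rule last_edge[OF stab]) (use eg rng n0 ene that gF in \<open>auto simp: e_def\<close>)
    then show ?thesis unfolding ps2_def using eg rng n0 ene by (simp add: e_def)
  qed
  have sub1: "F \<subseteq> fst s1" "fst s1 \<subseteq> g" using P1 gF by auto
  define s2 where "s2 = run_IC N \<delta> c f k Ef s1 ps2"
  have P2: "fst s2 = fst s1 \<union> edges ps2 \<and> (\<forall>a b. a < N \<longrightarrow> b < N \<longrightarrow> a \<noteq> b \<longrightarrow> snd s2 a b) \<and> valid_path N ps2"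
  proof -
    note r2 = phase2[where f=f and k=k and N=N and c=c and \<delta>=\<delta> and Ef=Ef and h="fst s1" and K="snd s1", OF good2 sub1 Kall]
    have e2: "(fst s1, snd s1) = s1" by simp
    show ?thesis by (rule r2[unfolded e2 s2_def[symmetric]])
  qed
  have fin: "fst s2 = g" using P2 P1 gF by (simp add: ps2_def e_def)
  have run: "run_IC N \<delta> c f k Ef init_state (ps1 @ ps2) = s2"
    unfolding s2_def s1_def run_append ..
  have vp: "valid_path N (ps1 @ ps2)"
    using goodP1_valid[OF g1] P2 by (simp add: valid_append)
  show ?thesis by (rule in_G_IC[OF stab vp]) (use run fin P2 in auto)
qed



lemma reroute:
  assumes cuv: "conn (g - {{u, v}}) u v"
  shows "walk g a b n \<Longrightarrow> conn (g - {{u, v}}) a b"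
proof (induction n arbitrary: a)
  case 0 then show ?case by (simp add: conn_refl)
next
  case (Suc n)
  then obtain m where m: "{a, m} \<in> g" "walk g m b n" by auto
  have c2: "conn (g - {{u, v}}) m b" using Suc.IH m(2) by blast
  have c1: "conn (g - {{u, v}}) a m"
  proof (cases "{a, m} = {u, v}")
    case True
    then have "(a = u \<and> m = v) \<or> (a = v \<and> m = u)" by (auto simp: doubleton_eq_iff)
    then show ?thesis using cuv conn_sym by blast
  next
    case False
    then have "{a, m} \<in> g - {{u, v}}" using m(1) by blast
    then show ?thesis by (rule conn_edge)
  qed
  show ?case by (rule conn_trans[OF c1 c2])
qed

definition pick :: "nat \<Rightarrow> nat set \<Rightarrow> nat \<times> nat" where
  "pick N e = (SOME p. fst p < N \<and> snd p < N \<and> fst p \<noteq> snd p \<and> e = {fst p, snd p})"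

lemma pick_spec:
  assumes net: "network N g" and e: "e \<in> g"
  shows "fst (pick N e) < N \<and> snd (pick N e) < N \<and> fst (pick N e) \<noteq> snd (pick N e) \<and> e = {fst (pick N e), snd (pick N e)}"
proof -
  obtain i j where ij: "i < N" "j < N" "i \<noteq> j" "e = {i, j}" using net e unfolding network_def by blast
  have "\<exists>p. fst p < N \<and> snd p < N \<and> fst p \<noteq> snd p \<and> e = {fst p, snd p}"
    by (rule exI[of _ "(i, j)"]) (use ij in simp)
  then show ?thesis unfolding pick_def by (rule someI_ex)
qed

lemma tree_good:
  assumes tree: "is_tree N g" and net: "network N g"
  shows "distinct xs \<Longrightarrow> set xs \<subseteq> g \<Longrightarrow> h \<subseteq> g \<Longrightarrow> h \<inter> set xs = {} \<Longrightarrow> goodP1 N h (map (pick N) xs)"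
proof (induction xs arbitrary: h)
  case Nil then show ?case by simp
next
  case (Cons x xs)
  obtain i j where p: "pick N x = (i, j)" by fastforce
  have xg: "x \<in> g" using Cons.prems by simp
  have ij: "i < N" "j < N" "i \<noteq> j" "x = {i, j}" using pick_spec[OF net xg] p by auto
  have nc: "\<not> conn h i j"
  proof
    assume c: "conn h i j"
    have "h \<subseteq> g - {x}" using Cons.prems by auto
    then have c': "conn (g - {{i, j}}) i j" using conn_mono[OF c] ij(4) by simp
    have "\<forall>a b. a < N \<longrightarrow> b < N \<longrightarrow> conn (g - {x}) a b"
    proof (intro allI impI)
      fix a b assume "a < N" "b < N"
      then have "conn g a b" using tree unfolding is_tree_def by blast
      then obtain n where "walk g a b n" unfolding conn_def by blast
      then show "conn (g - {x}) a b" using reroute[OF c'] ij(4) by simp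
    qed
    then show False using tree xg unfolding is_tree_def by blast
  qed
  have "goodP1 N (insert x h) (map (pick N) xs)"
    by (rule Cons.IH) (use Cons.prems in auto)
  then show ?case using p ij nc by simp
qed

theorem tree_main:
  assumes tree: "is_tree N g" and net: "network N g" and stab: "stable_CI N \<delta> c f k g"
    and d: "0 \<le> \<delta>" "\<delta> \<le> 1" and fp: "\<And>b. b < N \<Longrightarrow> 0 < f (k b)" and Ef: "c \<le> Ef" "0 \<le> Ef"
  shows "g \<in> G_IC N \<delta> c f k Ef"
proof -
  have "g \<subseteq> Pow {..<N}" using net unfolding network_def by auto
  then have "finite g" by (rule finite_subset) simp
  then obtain xs where xs: "distinct xs" "set xs = g" using finite_distinct_list by blast
  define ps where "ps = map (pick N) xs"
  have Eg: "edges ps = g"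
  proof -
    have "edges ps = (\<lambda>e. {fst (pick N e), snd (pick N e)}) ` g"
      unfolding ps_def edges_def xs(2)[symmetric] by (auto simp: case_prod_beta)
    also have "\<dots> = g" using pick_spec[OF net] by (auto simp: image_iff)
    finally show ?thesis .
  qed
  have g1: "goodP1 N {} ps" unfolding ps_def by (rule tree_good[OF tree net xs(1)]) (use xs in auto)
  define s1 where "s1 = run_IC N \<delta> c f k Ef init_state ps"
  have g1': "goodP1 N (fst init_state) ps" using g1 by (simp add: init_state_def)
  have i1: "\<forall>a b. snd init_state a b \<longrightarrow> conn (fst init_state) a b" by (simp add: init_state_def)
  have i2: "\<forall>a b. a \<noteq> b \<longrightarrow> conn (fst init_state) a b \<longrightarrow> snd init_state a b"
    by (simp add: init_state_def conn_empty)
  have e1: "fst init_state \<union> edges ps = g" using Eg by (simp add: init_state_def)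
  note r1 = phase1'[where f=f and k=k and N=N and c=c and Ef=Ef and \<delta>=\<delta>, OF d fp Ef g1' i1 i2]
  have P1: "fst s1 = g \<and> (\<forall>a b. snd s1 a b \<longrightarrow> conn (fst s1) a b) \<and>
      (\<forall>a b. a \<noteq> b \<longrightarrow> conn (fst s1) a b \<longrightarrow> snd s1 a b)"
    by (rule r1[unfolded s1_def[symmetric] e1])
  have ca: "\<forall>a b. a < N \<longrightarrow> b < N \<longrightarrow> conn g a b" using tree unfolding is_tree_def by blast
  have Kall: "\<forall>a b. a < N \<longrightarrow> b < N \<longrightarrow> a \<noteq> b \<longrightarrow> snd s1 a b" using ca P1 by simp
  show ?thesis by (rule in_G_IC[OF stab goodP1_valid[OF g1]]) (use P1 Kall in \<open>auto simp: s1_def\<close>)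
qed

theorem empty_main:
  assumes stab: "stable_CI N \<delta> c f k {}"
    and d: "0 \<le> \<delta>" "\<delta> \<le> 1" and fp: "\<And>b. b < N \<Longrightarrow> 0 < f (k b)" and Ef: "c \<le> Ef" "0 \<le> Ef"
  shows "{} \<in> G_IC N \<delta> c f k Ef"
proof -
  define ps where "ps = filter (\<lambda>(i, j). i \<noteq> j) (List.product [0..<N] [0..<N])"
  have sp: "set ps = {(i, j). i < N \<and> j < N \<and> i \<noteq> j}" unfolding ps_def by auto
  have v: "\<forall>(i, j)\<in>set ps. i < N \<and> j < N \<and> i \<noteq> j" unfolding sp by auto
  define p where "p = concat (map (\<lambda>x. [x, x]) ps)"
  note r = empty_all[where f=f and k=k and N=N and c=c and Ef=Ef and \<delta>=\<delta>, OF stab d fp Ef v, of "\<lambda>_ _. False"]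
  have R: "fst (run_IC N \<delta> c f k Ef init_state p) = {} \<and>
     (\<forall>(i, j)\<in>set ps. snd (run_IC N \<delta> c f k Ef init_state p) i j)"
    using r unfolding p_def init_state_def by simp
  have vp: "valid_path N p" unfolding p_def valid_path_def using v by auto
  show ?thesis by (rule in_G_IC[OF stab vp]) (use R sp in auto)
qed



lemma complete_cs:
  assumes "N \<ge> 2" "network N g" "is_complete N g" shows "cstruct N g {..<N} (\<lambda>_. 0)"
proof -
  have "g = {{a, b} | a b. a \<in> {..<N} \<and> b \<in> {..<N} \<and> a \<noteq> b}"
  proof
    show "g \<subseteq> {{a, b} | a b. a \<in> {..<N} \<and> b \<in> {..<N} \<and> a \<noteq> b}"
      using assms(2) unfolding network_def by blast
    show "{{a, b} | a b. a \<in> {..<N} \<and> b \<in> {..<N} \<and> a \<noteq> b} \<subseteq> g"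
      using assms(3) unfolding is_complete_def by blast
  qed
  moreover have "0 \<in> {..<N}" using assms(1) by simp
  then have "{..<N} \<noteq> {}" by blast
  ultimately show ?thesis unfolding cstruct_def by auto
qed

lemma star_cs:
  assumes "is_star N g" obtains i where "cstruct N g {i} (\<lambda>_. i)"
proof -
  obtain i where i: "i < N" "g = {{i, j} | j. j < N \<and> j \<noteq> i}" using assms unfolding is_star_def by blast
  have "cstruct N g {i} (\<lambda>_. i)" unfolding cstruct_def using i by auto
  then show ?thesis by (rule that)
qed

lemma cp_cs:
  assumes net: "network N g" and cp: "is_core_periphery N g"
  obtains C anc where "cstruct N g C anc"
proof -
  obtain I' where I': "I' \<noteq> {}" "I' \<subset> {..<N}" "\<forall>a\<in>I'. \<forall>b\<in>I'. a \<noteq> b \<longrightarrow> {a, b} \<in> g"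
    and per: "\<forall>j\<in>{..<N} - I'. card {a\<in>I'. {a, j} \<in> g} = 1 \<and> (\<forall>b. b \<notin> I' \<longrightarrow> {j, b} \<notin> g)"
    using cp unfolding is_core_periphery_def by blast
  define anc where "anc p = (THE a. a \<in> I' \<and> {a, p} \<in> g)" for p
  have ancs: "{a\<in>I'. {a, p} \<in> g} = {anc p}" if "p < N" "p \<notin> I'" for p
  proof -
    have "card {a\<in>I'. {a, p} \<in> g} = 1" using per that by auto
    then obtain a where a: "{a\<in>I'. {a, p} \<in> g} = {a}" by (rule card_1_singletonE)
    then have "anc p = a" unfolding anc_def by (rule_tac the_equality) auto
    then show ?thesis using a by simp
  qed
  have "cstruct N g I' anc"
    unfolding cstruct_def
  proof (intro conjI)
    show "I' \<subseteq> {..<N}" "I' \<noteq> {}" using I' by auto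
    show "\<forall>p. p < N \<longrightarrow> p \<notin> I' \<longrightarrow> anc p \<in> I'" using ancs by blast
    show "g = {{a, b} |a b. a \<in> I' \<and> b \<in> I' \<and> a \<noteq> b} \<union> {{anc p, p} |p. p < N \<and> p \<notin> I'}"
    proof
      show "g \<subseteq> {{a, b} |a b. a \<in> I' \<and> b \<in> I' \<and> a \<noteq> b} \<union> {{anc p, p} |p. p < N \<and> p \<notin> I'}"
      proof
        fix e assume e: "e \<in> g"
        then obtain x y where xy: "x < N" "y < N" "x \<noteq> y" "e = {x, y}" using net unfolding network_def by blast
        show "e \<in> {{a, b} |a b. a \<in> I' \<and> b \<in> I' \<and> a \<noteq> b} \<union> {{anc p, p} |p. p < N \<and> p \<notin> I'}"
        proof (cases "x \<in> I'")
          case xI: True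
          show ?thesis
          proof (cases "y \<in> I'")
            case True then show ?thesis using xI xy by blast
          next
            case False
            have "{x, y} \<in> g" using e xy by simp
            then have "x \<in> {a\<in>I'. {a, y} \<in> g}" using xI by simp
            then have "x = anc y" using ancs[OF xy(2) False] by simp
            then show ?thesis using xy False by blast
          qed
        next
          case xn: False
          show ?thesis
          proof (cases "y \<in> I'")
            case True
            have "{y, x} \<in> g" using e xy by (simp add: insert_commute)
            then have "y \<in> {a\<in>I'. {a, x} \<in> g}" using True by simp
            then have "y = anc x" using ancs[OF xy(1) xn] by simp
            then have "e = {anc x, x}" using xy by (simp add: insert_commute)
            then show ?thesis using xy xn by blast
          next
            case False
            have "{x, y} \<notin> g" using per xy xn False by blast
            then show ?thesis using e xy by simp
          qed
        qed
      qed
      show "{{a, b} |a b. a \<in> I' \<and> b \<in> I' \<and> a \<noteq> b} \<union> {{anc p, p} |p. p < N \<and> p \<notin> I'} \<subseteq> g"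
      proof
        fix e assume "e \<in> {{a, b} |a b. a \<in> I' \<and> b \<in> I' \<and> a \<noteq> b} \<union> {{anc p, p} |p. p < N \<and> p \<notin> I'}"
        then show "e \<in> g"
        proof
          assume "e \<in> {{a, b} |a b. a \<in> I' \<and> b \<in> I' \<and> a \<noteq> b}" then show ?thesis using I'(3) by blast
        next
          assume "e \<in> {{anc p, p} |p. p < N \<and> p \<notin> I'}"
          then obtain p where p: "e = {anc p, p}" "p < N" "p \<notin> I'" by blast
          have "anc p \<in> {a\<in>I'. {a, p} \<in> g}" using ancs[OF p(2,3)] by simp
          then show ?thesis using p by simp
        qed
      qed
    qed
  qed
  then show ?thesis by (rule that)
qed

theorem theorem2:
  fixes N :: nat and \<delta> c :: real and H :: "'x measure" and f :: "'x \<Rightarrow> real"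
    and k :: "nat \<Rightarrow> 'x" and g :: "nat set set"
  assumes N2: "N \<ge> 2"
    and delta: "0 < \<delta>" "\<delta> < 1"
    and cpos: "c > 0"
    and prior: "prob_space H"
    and integ: "integrable H f"
    and fpos: "\<forall>x\<in>space H. f x > 0"
    and types: "\<forall>i<N. k i \<in> space H"
    and Ef_ge: "(\<integral>x. f x \<partial>H) \<ge> c"
    and net: "network N g"
    and stab: "stable_CI N \<delta> c f k g"
    and cls: "g = {} \<or> is_tree N g \<or> is_star N g \<or> is_complete N g
              \<or> is_core_periphery N g \<or> is_wheel N g"
  shows "g \<in> G_IC N \<delta> c f k (\<integral>x. f x \<partial>H)"
proof -
  have d: "0 \<le> \<delta>" "\<delta> \<le> 1" using delta by auto
  have fp: "\<And>b. b < N \<Longrightarrow> 0 < f (k b)" using fpos types by blast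
  have Ef: "c \<le> (\<integral>x. f x \<partial>H)" "0 \<le> (\<integral>x. f x \<partial>H)" using Ef_ge cpos by auto
  from cls show ?thesis
  proof (elim disjE)
    assume g0: "g = {}"
    have s0: "stable_CI N \<delta> c f k {}" using stab g0 by simp
    show ?thesis using empty_main[OF s0 d fp Ef] g0 by simp
  next
    assume "is_tree N g"
    then show ?thesis by (rule tree_main[OF _ net stab d fp Ef])
  next
    assume "is_star N g"
    then obtain i where "cstruct N g {i} (\<lambda>_. i)" by (rule star_cs)
    then show ?thesis by (rule core_main[OF _ stab d fp Ef])
  next
    assume "is_complete N g"
    then have "cstruct N g {..<N} (\<lambda>_. 0)" by (rule complete_cs[OF N2 net])
    then show ?thesis by (rule core_main[OF _ stab d fp Ef])
  next
    assume "is_core_periphery N g"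
    then obtain C anc where "cstruct N g C anc" by (rule cp_cs[OF net])
    then show ?thesis by (rule core_main[OF _ stab d fp Ef])
  next
    assume "is_wheel N g"
    then obtain \<sigma> where "bij_betw \<sigma> {..<N} {..<N}" "g = {{\<sigma> m, \<sigma> ((m + 1) mod N)} | m. m < N}"
      unfolding is_wheel_def by blast
    then show ?thesis using wheel_main[OF N2 _ _ stab d fp Ef] by blast
  qed
qed


end
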